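(* Let $n$ be a positive integer and assume hypothesis $(\star)$ for $\mathbb{R}^n$: for every family $\mathcal{F}$ of closed Lebesgue-null subsets of $\mathbb{R}^n$ with $|\mathcal{F}|<\mathfrak{c}$ and every Lebesgue-null set $N\subset\mathbb{R}^n$, one has $N\cup\bigcup\mathcal{F}\neq\mathbb{R}^n$. (In particular this holds under the Continuum Hypothesis.) Then there exists a set $A\subset\mathbb{R}^n$ that is not Lebesgue null such that for every continuous function $f:\mathbb{R}^n\to\mathbb{R}$ the set $f(A)$ contains no non-degenerate interval.
   Context: $\mathfrak{c}$ denotes the cardinality of the continuum. *)

theory Defs
  imports "HOL-Analysis.Analysis" "HOL-Library.Equipollence"
begin

end

theory Submission
  imports Defs
begin

lemma fun_nat_lepoll:
  fixes g :: "'b \<Rightarrow> nat set"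
  assumes g: "inj g"
  shows "(UNIV :: (nat \<Rightarrow> 'b) set) \<lesssim> (UNIV :: real set)"
proof -
  define h where "h F = {prod_encode (k,m) | k m. m \<in> g (F k)}" for F :: "nat \<Rightarrow> 'b"
  have "inj h"
  proof (rule injI)
    fix F G assume eq: "h F = h G"
    show "F = G"
    proof
      fix k
      have "m \<in> g (F k) \<longleftrightarrow> m \<in> g (G k)" for m
      proof -
        have "m \<in> g (F k) \<longleftrightarrow> prod_encode (k,m) \<in> h F"
          unfolding h_def by (auto dest: inj_onD[OF inj_prod_encode, of "(k,m)", simplified])
        moreover have "m \<in> g (G k) \<longleftrightarrow> prod_encode (k,m) \<in> h G"
          unfolding h_def by (auto dest: inj_onD[OF inj_prod_encode, of "(k,m)", simplified])
        ultimately show ?thesis using eq by simp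
      qed
      then have "g (F k) = g (G k)" by blast
      then show "F k = G k" using g by (simp add: inj_eq)
    qed
  qed
  then have "(UNIV :: (nat \<Rightarrow> 'b) set) \<lesssim> (UNIV :: nat set set)"
    unfolding lepoll_def by blast
  then show ?thesis using nat_sets_eqpoll_reals eqpoll_imp_lepoll lepoll_trans by blast
qed

lemma fun_nat_real_lepoll: "(UNIV :: (nat \<Rightarrow> real) set) \<lesssim> (UNIV :: real set)"
proof -
  obtain g :: "real \<Rightarrow> nat set" where g: "bij g"
    using nat_sets_eqpoll_reals eqpoll_sym unfolding eqpoll_def by blast
  then show ?thesis using fun_nat_lepoll[of g] by (simp add: bij_is_inj)
qed

lemma lesspoll_of_ordLess: "(card_of (S::'a set), card_of (UNIV :: 'a set)) \<in> ordLess \<Longrightarrow> S \<prec> (UNIV :: 'a set)"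
  unfolding lesspoll_def
  by (simp add: subset_imp_lepoll eqpoll_iff_card_of_ordIso not_ordLess_ordIso)

lemma closed_fiber: "continuous_on UNIV (f :: 'a::topological_space \<Rightarrow> 'b::t1_space) \<Longrightarrow> closed (f -` {c})"
  using continuous_closed_preimage_constant[of UNIV f c] by (simp add: vimage_def)

lemma fiber_countable:
  fixes f :: "real ^ 'n \<Rightarrow> real"
  assumes "continuous_on UNIV f"
  shows "countable {y. f -` {y} \<notin> null_sets lebesgue}"
proof -
  have fm: "f \<in> borel_measurable borel" using assms by (rule borel_measurable_continuous_onI)
  have fm': "f \<in> borel_measurable (restrict_space lborel (cball 0 (real k)))" for k
    by (rule measurable_restrict_space1) (use fm in simp)
  define M where "M k = distr (restrict_space lborel (cball 0 (real k))) borel f" for k :: nat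
  have fin: "finite_measure (M k)" for k
    unfolding M_def
    apply (rule finite_measure.finite_measure_distr[OF _ fm'])
    apply (rule finite_measureI)
    using emeasure_lborel_cball_finite[of 0 "real k"]
    by (simp add: emeasure_restrict_space) (erule less_imp_neq)
  have Mk: "measure (M k) {y} = measure lborel (f -` {y} \<inter> cball 0 (real k))" for k y
    unfolding M_def
    apply (subst measure_distr[OF fm'], simp)
    apply (subst measure_restrict_space)
      apply simp
     apply auto[1]
    by (simp add: Int_commute)
  have "{y. f -` {y} \<notin> null_sets lebesgue} \<subseteq> (\<Union>k. {y. measure (M k) {y} \<noteq> 0})"
  proof
    fix y assume y: "y \<in> {y. f -` {y} \<notin> null_sets lebesgue}"
    have cl: "closed (f -` {y})"
      using closed_fiber[OF assms] .
    show "y \<in> (\<Union>k. {y. measure (M k) {y} \<noteq> 0})"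
    proof (rule ccontr)
      assume "y \<notin> (\<Union>k. {y. measure (M k) {y} \<noteq> 0})"
      then have z: "measure lborel (f -` {y} \<inter> cball 0 (real k)) = 0" for k
        using Mk by auto
      have "f -` {y} \<inter> cball 0 (real k) \<in> null_sets lborel" for k
      proof -
        have s: "f -` {y} \<inter> cball 0 (real k) \<in> sets lborel"
          using cl by (simp add: borel_closed)
        have "emeasure lborel (f -` {y} \<inter> cball 0 (real k)) \<le> emeasure lborel (cball (0 :: real ^ 'n) (real k))"
          by (auto intro!: emeasure_mono)
        then have "emeasure lborel (f -` {y} \<inter> cball 0 (real k)) < \<infinity>"
          using emeasure_lborel_cball_finite[of 0 "real k"] by (meson le_less_trans)
        then have "emeasure lborel (f -` {y} \<inter> cball 0 (real k)) = ennreal (measure lborel (f -` {y} \<inter> cball 0 (real k)))"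
          by (intro emeasure_eq_ennreal_measure) (simp add: infinity_ennreal_def less_imp_neq)
        then have "emeasure lborel (f -` {y} \<inter> cball 0 (real k)) = 0" using z[of k] by simp
        then show ?thesis using s by (intro null_setsI)
      qed
      then have "(\<Union>k. f -` {y} \<inter> cball 0 (real k)) \<in> null_sets lborel" by (rule null_sets_UN)
      moreover have "(\<Union>k. f -` {y} \<inter> cball 0 (real k)) = f -` {y}"
      proof (intro equalityI subsetI)
        fix x assume x: "x \<in> f -` {y}"
        obtain k :: nat where "norm x \<le> real k" using real_arch_simple by blast
        then have "x \<in> f -` {y} \<inter> cball 0 (real k)" using x by (simp add: dist_norm)
        then show "x \<in> (\<Union>k. f -` {y} \<inter> cball 0 (real k))" by blast
      qed blast
      ultimately have "f -` {y} \<in> null_sets lborel" by simp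
      then have "f -` {y} \<in> null_sets lebesgue" by (rule null_sets_completionI)
      then show False using y by simp
    qed
  qed
  moreover have "countable (\<Union>k. {y. measure (M k) {y} \<noteq> 0})"
    by (rule countable_UN[OF countableI_type]) (rule finite_measure.countable_support[OF fin])
  ultimately show ?thesis by (rule countable_subset)
qed

lemma null_enum:
  "\<exists>Nn :: real \<Rightarrow> (real ^ 'n) set. (\<forall>\<alpha>. Nn \<alpha> \<in> null_sets lebesgue) \<and>
     (\<forall>S \<in> null_sets lebesgue. \<exists>\<alpha>. S \<subseteq> Nn \<alpha>)"
proof -
  obtain B :: "nat \<Rightarrow> (real ^ 'n) set" where "inj B" "\<And>n. open (B n)"
    and B: "\<And>S. open S \<Longrightarrow> \<exists>k. S = \<Union>{B n |n. n \<in> k}"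
    by (rule univ_second_countable_sequence[where 'a="real ^ 'n"]) (rule that)
  define G where "G p = (\<Inter>k. \<Union>{B n |n. n \<in> p k})" for p :: "nat \<Rightarrow> nat set"
  have "(UNIV :: (nat \<Rightarrow> nat set) set) \<lesssim> (UNIV :: real set)"
    by (rule fun_nat_lepoll[of id]) simp
  then obtain s :: "real \<Rightarrow> (nat \<Rightarrow> nat set)" where s: "UNIV \<subseteq> s ` UNIV"
    unfolding lepoll_iff by blast
  define Nn where "Nn \<alpha> = (if G (s \<alpha>) \<in> null_sets lebesgue then G (s \<alpha>) else {})" for \<alpha>
  have "\<forall>\<alpha>. Nn \<alpha> \<in> null_sets lebesgue" by (simp add: Nn_def)
  moreover have "\<exists>\<alpha>. S \<subseteq> Nn \<alpha>" if S: "S \<in> null_sets lebesgue" for S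
  proof -
    have Ss: "S \<in> sets lebesgue" using S by (rule null_setsD2)
    obtain C T where C: "gdelta C" "T \<in> null_sets lebesgue" "S \<union> T = C" "disjnt S T"
      by (rule lebesgue_set_almost_gdelta[OF Ss])
    have Cn: "C \<in> null_sets lebesgue" using null_sets.Un[OF S C(2)] C(3) by simp
    obtain U :: "nat \<Rightarrow> (real ^ 'n) set" where U: "\<And>n. open (U n)" "\<Inter>(range U) = C"
    proof (rule gdelta.cases[OF C(1)])
      fix F :: "nat \<Rightarrow> (real ^ 'n) set" assume "C = \<Inter>(F ` UNIV)" "\<And>n::nat. open (F n)"
      then show thesis by (intro that[of F]) auto
    qed
    have "\<forall>n. \<exists>k. U n = \<Union>{B m |m. m \<in> k}"
    proof
      fix n
      show "\<exists>k. U n = \<Union>{B m |m. m \<in> k}" by (rule B[OF U(1)])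
    qed
    from choice[OF this] obtain p where p: "\<forall>n. U n = \<Union>{B m |m. m \<in> p n}" by blast
    have "G p = (\<Inter>n. U n)" unfolding G_def using p by simp
    then have Gp: "G p = C" using U(2) by simp
    have "p \<in> s ` UNIV" using subsetD[OF s UNIV_I] .
    then obtain \<alpha> where "p = s \<alpha>" by (rule imageE)
    then have "Nn \<alpha> = C" using Cn Gp by (simp add: Nn_def)
    then show ?thesis using C(3) by auto
  qed
  ultimately show ?thesis by blast
qed

lemma fun_enum:
  "\<exists>ff :: real \<Rightarrow> (real ^ 'n \<Rightarrow> real). \<exists>pp qq :: real \<Rightarrow> real.
     (\<forall>\<alpha>. continuous_on UNIV (ff \<alpha>) \<and> pp \<alpha> < qq \<alpha>) \<and>
     (\<forall>f p q. continuous_on UNIV f \<longrightarrow> p < q \<longrightarrow> (\<exists>\<alpha>. ff \<alpha> = f \<and> pp \<alpha> = p \<and> qq \<alpha> = q))"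
proof -
  obtain D :: "(real ^ 'n) set" where D: "countable D" "\<And>X. open X \<Longrightarrow> X \<noteq> {} \<Longrightarrow> \<exists>d \<in> D. d \<in> X"
    using countable_dense_setE by blast
  have "D \<noteq> {}" using D(2)[of UNIV] by auto
  define d where "d = from_nat_into D"
  have rd: "range d = D" unfolding d_def using D(1) \<open>D \<noteq> {}\<close> by (simp add: range_from_nat_into)
  define T where "T = {(f :: real ^ 'n \<Rightarrow> real, p :: real, q :: real). continuous_on UNIV f \<and> p < q}"
  define e where "e = (\<lambda>(f :: real ^ 'n \<Rightarrow> real, p :: real, q :: real). (\<lambda>k::nat. if k = 0 then p else if k = 1 then q else f (d (k - 2))))"
  have "inj_on e T"
  proof (rule inj_onI)
    fix x y assume x: "x \<in> T" and y: "y \<in> T" and exy: "e x = e y"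
    obtain f p q where xe: "x = (f,p,q)" by (cases x) auto
    obtain g p' q' where ye: "y = (g,p',q')" by (cases y) auto
    have fc: "continuous_on UNIV f" and gc: "continuous_on UNIV g" using x y xe ye T_def by auto
    have "p = p'" using fun_cong[OF exy, of 0] xe ye e_def by simp
    moreover have "q = q'" using fun_cong[OF exy, of 1] xe ye e_def by simp
    moreover have fdg: "f (d k) = g (d k)" for k
      using fun_cong[OF exy, of "k+2"] xe ye e_def by simp
    have fg: "f z = g z" if "z \<in> D" for z
    proof -
      have "z \<in> range d" using rd that by simp
      then obtain k where "z = d k" by blast
      then show ?thesis using fdg by simp
    qed
    have "f = g"
    proof (rule ccontr)
      assume "f \<noteq> g"
      then have ne: "{z. f z \<noteq> g z} \<noteq> {}" by auto
      have "open {z. f z \<noteq> g z}"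
        using open_Collect_neq[OF fc gc] by simp
      then obtain z where "z \<in> D" "z \<in> {z. f z \<noteq> g z}" using D(2)[OF _ ne] by blast
      then show False using fg by simp
    qed
    ultimately show "x = y" using xe ye by simp
  qed
  then have "T \<lesssim> (UNIV :: (nat \<Rightarrow> real) set)" unfolding lepoll_def by blast
  then have "T \<lesssim> (UNIV :: real set)" using fun_nat_real_lepoll lepoll_trans by blast
  then obtain s :: "real \<Rightarrow> (real ^ 'n \<Rightarrow> real) \<times> real \<times> real" where s: "T \<subseteq> s ` UNIV"
    unfolding lepoll_iff by blast
  define t where "t \<alpha> = (if s \<alpha> \<in> T then s \<alpha> else ((\<lambda>_. 0), 0, 1))" for \<alpha>
  have tT: "t \<alpha> \<in> T" for \<alpha> unfolding t_def T_def by auto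
  show ?thesis
  proof (rule exI[of _ "\<lambda>\<alpha>. fst (t \<alpha>)"], rule exI[of _ "\<lambda>\<alpha>. fst (snd (t \<alpha>))"],
      rule exI[of _ "\<lambda>\<alpha>. snd (snd (t \<alpha>))"], intro conjI allI impI)
    fix \<alpha> show "continuous_on UNIV (fst (t \<alpha>))" "fst (snd (t \<alpha>)) < snd (snd (t \<alpha>))"
      using tT[of \<alpha>] unfolding T_def by auto
  next
    fix f p q assume "continuous_on UNIV (f :: real ^ 'n \<Rightarrow> real)" "(p::real) < q"
    then have "(f,p,q) \<in> T" unfolding T_def by auto
    then have "(f,p,q) \<in> range s" using s by (meson subsetD)
    then obtain \<alpha> where "s \<alpha> = (f,p,q)" by (metis rangeE)
    then have "t \<alpha> = (f,p,q)" using \<open>(f,p,q) \<in> T\<close> by (simp add: t_def)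
    then show "\<exists>\<alpha>. fst (t \<alpha>) = f \<and> fst (snd (t \<alpha>)) = p \<and> snd (snd (t \<alpha>)) = q" by (intro exI[of _ \<alpha>]) simp
  qed
qed

lemma hyperplane_null:
  fixes k :: "'n::finite"
  shows "{x :: real ^ 'n. x $ k = c} \<in> null_sets lebesgue"
proof -
  have "negligible {x :: real ^ 'n. x \<bullet> axis k 1 = c}"
    by (rule negligible_standard_hyperplane) simp
  moreover have "{x :: real ^ 'n. x \<bullet> axis k 1 = c} = {x. x $ k = c}"
    by (simp add: cart_eq_inner_axis)
  ultimately show ?thesis by (simp add: negligible_iff_null_sets)
qed

lemma step_exists:
  fixes ff :: "'i \<Rightarrow> real ^ 'n \<Rightarrow> real" and S :: "'i set" and N :: "(real ^ 'n) set"
    and g :: "'i \<Rightarrow> (real ^ 'n) \<times> real" and h :: "real ^ 'n \<Rightarrow> real"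
  assumes star: "\<And>(F :: (real ^ 'n) set set) (N :: (real ^ 'n) set).
      (\<forall>S\<in>F. closed S \<and> S \<in> null_sets lebesgue) \<Longrightarrow>
      F \<prec> (UNIV :: real set) \<Longrightarrow>
      N \<in> null_sets lebesgue \<Longrightarrow>
      N \<union> \<Union>F \<noteq> UNIV"
    and S: "S \<prec> (UNIV :: real set)" and N: "N \<in> null_sets lebesgue"
    and fb: "\<forall>\<beta>\<in>S. continuous_on UNIV (ff \<beta>) \<and> ff \<beta> -` {snd (g \<beta>)} \<in> null_sets lebesgue"
    and h: "continuous_on UNIV h" and pq: "p < q"
  shows "\<exists>a y. a \<notin> N \<and> (\<forall>\<beta>\<in>S. ff \<beta> a \<noteq> snd (g \<beta>)) \<and> p < y \<and> y < q \<and>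
     (\<forall>\<beta>\<in>S. h (fst (g \<beta>)) \<noteq> y) \<and> h a \<noteq> y \<and> h -` {y} \<in> null_sets lebesgue"
proof -
  define F where "F = (\<lambda>\<beta>. ff \<beta> -` {snd (g \<beta>)}) ` S"
  have smF: "F \<prec> (UNIV :: real set)" unfolding F_def by (rule lesspoll_trans1[OF image_lepoll S])
  have clF: "\<forall>T\<in>F. closed T \<and> T \<in> null_sets lebesgue"
    unfolding F_def using fb closed_fiber by blast
  have "N \<union> \<Union>F \<noteq> UNIV" by (rule star[OF clF smF N])
  then obtain a where a: "a \<notin> N" "a \<notin> \<Union>F" by blast
  then have a2: "\<forall>\<beta>\<in>S. ff \<beta> a \<noteq> snd (g \<beta>)" unfolding F_def by blast
  define i0 :: 'n where "i0 = undefined"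
  define phi where "phi x = p + (q - p) * (arctan x / pi + 1/2)" for x
  have phimono: "phi x < phi x'" if "x < x'" for x x'
  proof -
    have "arctan x < arctan x'" using that arctan_less_iff by blast
    then have "arctan x / pi < arctan x' / pi" by (simp add: divide_strict_right_mono)
    then show ?thesis unfolding phi_def using pq by simp
  qed
  have phiinj: "phi x = phi x' \<Longrightarrow> x = x'" for x x'
    using phimono[of x x'] phimono[of x' x] by (cases "x < x'"; cases "x' < x") auto
  have phib: "p < phi x \<and> phi x < q" for x
  proof -
    have b: "- (pi/2) < arctan x" "arctan x < pi/2" using arctan_bounded by auto
    then have "0 < arctan x / pi + 1/2" "arctan x / pi + 1/2 < 1"
      by (auto simp: field_simps)
    then have "0 < (q - p) * (arctan x / pi + 1/2)" "(q - p) * (arctan x / pi + 1/2) < (q - p) * 1"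
      using pq by (intro mult_pos_pos mult_strict_left_mono; simp)+
    moreover define w where "w = (q - p) * (arctan x / pi + 1/2)"
    ultimately have "0 < w" "w < q - p" by simp_all
    then show ?thesis unfolding phi_def w_def[symmetric] by linarith
  qed
  have phic: "continuous_on UNIV (\<lambda>z :: real ^ 'n. phi (z $ i0))"
    unfolding phi_def by (intro continuous_intros) auto
  define L where "L t = {z :: real ^ 'n. phi (z $ i0) = t}" for t
  have Lnull: "L t \<in> null_sets lebesgue" for t
  proof (cases "L t = {}")
    case True then show ?thesis by simp
  next
    case False
    then obtain z0 where "z0 \<in> L t" by blast
    then have sub: "L t \<subseteq> {z. z $ i0 = z0 $ i0}" unfolding L_def using phiinj by auto
    have neg: "negligible {z :: real ^ 'n. z $ i0 = z0 $ i0}"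
      unfolding negligible_iff_null_sets by (rule hyperplane_null)
    have "negligible (L t)" by (rule negligible_subset[OF neg sub])
    then show ?thesis unfolding negligible_iff_null_sets .
  qed
  have Lclosed: "closed (L t)" for t
    unfolding L_def using closed_fiber[OF phic, of t] by (simp add: vimage_def)
  define Bd where "Bd = {y. h -` {y} \<notin> null_sets lebesgue} \<union> {h a}"
  have cBd: "countable Bd" unfolding Bd_def using fiber_countable[OF h] by simp
  define Y where "Y = (\<lambda>\<beta>. h (fst (g \<beta>))) ` S"
  define F' where "F' = L ` Y"
  define N' where "N' = (\<Union>t\<in>Bd. L t)"
  have nN': "N' \<in> null_sets lebesgue" unfolding N'_def using cBd Lnull by (intro null_sets_UN') auto
  have smF': "F' \<prec> (UNIV :: real set)" unfolding F'_def Y_def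
    by (rule lesspoll_trans1[OF image_lepoll lesspoll_trans1[OF image_lepoll S]])
  have clF': "\<forall>T\<in>F'. closed T \<and> T \<in> null_sets lebesgue" unfolding F'_def using Lclosed Lnull by blast
  have "N' \<union> \<Union>F' \<noteq> UNIV" by (rule star[OF clF' smF' nN'])
  then obtain z where z: "z \<notin> N'" "z \<notin> \<Union>F'" by blast
  define y where "y = phi (z $ i0)"
  have "z \<in> L y" unfolding L_def y_def by simp
  then have yB: "y \<notin> Bd" and yY: "y \<notin> Y" using z unfolding N'_def F'_def by blast+
  have y1: "h -` {y} \<in> null_sets lebesgue" "h a \<noteq> y" using yB unfolding Bd_def by blast+
  have y2: "\<forall>\<beta>\<in>S. h (fst (g \<beta>)) \<noteq> y" using yY unfolding Y_def by blast
  have y3: "p < y \<and> y < q" unfolding y_def by (rule phib)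
  show ?thesis
    by (intro exI[of _ a] exI[of _ y] conjI) (use a(1) a2 y1 y2 y3 in blast)+
qed

theorem theorem3p4:
  assumes star: "\<And>(F :: (real ^ 'n) set set) (N :: (real ^ 'n) set).
      (\<forall>S\<in>F. closed S \<and> S \<in> null_sets lebesgue) \<Longrightarrow>
      F \<prec> (UNIV :: real set) \<Longrightarrow>
      N \<in> null_sets lebesgue \<Longrightarrow>
      N \<union> \<Union>F \<noteq> UNIV"
  shows "\<exists>A :: (real ^ 'n) set. A \<notin> null_sets lebesgue \<and>
      (\<forall>f :: real ^ 'n \<Rightarrow> real. continuous_on UNIV f \<longrightarrow>
         \<not> (\<exists>a b. a < b \<and> {a..b} \<subseteq> f ` A))"
proof -
  obtain Nn :: "real \<Rightarrow> (real ^ 'n) set" where Nn1: "\<And>\<alpha>. Nn \<alpha> \<in> null_sets lebesgue"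
    and Nn2: "\<And>S. S \<in> null_sets lebesgue \<Longrightarrow> \<exists>\<alpha>. S \<subseteq> Nn \<alpha>"
    using null_enum[where 'n='n] by blast
  obtain ff :: "real \<Rightarrow> real ^ 'n \<Rightarrow> real" and pp qq :: "real \<Rightarrow> real"
    where ffc: "\<And>\<alpha>. continuous_on UNIV (ff \<alpha>)" and ppq: "\<And>\<alpha>. pp \<alpha> < qq \<alpha>"
    and ffs: "\<And>f p q. continuous_on UNIV f \<Longrightarrow> p < q \<Longrightarrow> \<exists>\<alpha>. ff \<alpha> = f \<and> pp \<alpha> = p \<and> qq \<alpha> = q"
    using fun_enum[where 'n='n] by blast
  define r where "r = card_of (UNIV :: real set)"
  have wo: "wo_rel r" unfolding r_def wo_rel_def by (rule card_of_Well_order)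
  have Fr: "Field r = UNIV" unfolding r_def by (rule Field_card_of)
  define R where "R = r - Id"
  have wfR: "wf R" unfolding R_def by (rule wo_rel.WF[OF wo])
  have uS: "\<beta> \<in> underS r \<alpha> \<longleftrightarrow> (\<beta>, \<alpha>) \<in> R" for \<alpha> \<beta> by (auto simp: underS_def R_def)
  have small: "underS r \<alpha> \<prec> (UNIV :: real set)" for \<alpha>
  proof -
    have "(card_of (underS r \<alpha>), r) \<in> ordLess"
      using card_of_underS[OF card_of_Card_order, of \<alpha> "UNIV :: real set"] unfolding r_def
      by (simp add: Field_card_of)
    then show ?thesis unfolding r_def by (rule lesspoll_of_ordLess)
  qed
  define P where "P \<alpha> g pr \<longleftrightarrow> fst pr \<notin> Nn \<alpha> \<and> (\<forall>\<beta>\<in>underS r \<alpha>. ff \<beta> (fst pr) \<noteq> snd (g \<beta>)) \<and>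
      pp \<alpha> < snd pr \<and> snd pr < qq \<alpha> \<and> (\<forall>\<beta>\<in>underS r \<alpha>. ff \<alpha> (fst (g \<beta>)) \<noteq> snd pr) \<and>
      ff \<alpha> (fst pr) \<noteq> snd pr \<and> ff \<alpha> -` {snd pr} \<in> null_sets lebesgue"
    for \<alpha> and g :: "real \<Rightarrow> (real ^ 'n) \<times> real" and pr :: "(real ^ 'n) \<times> real"
  define H where "H g \<alpha> = (SOME pr. P \<alpha> g pr)" for g \<alpha>
  define sq where "sq = wfrec R H"
  have sq_eq: "sq \<alpha> = H (cut sq R \<alpha>) \<alpha>" for \<alpha> unfolding sq_def by (rule wfrec[OF wfR])
  have cut_eq: "cut sq R \<alpha> \<beta> = sq \<beta>" if "\<beta> \<in> underS r \<alpha>" for \<alpha> \<beta>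
    using that uS by (simp add: cut_apply)
  have Pall: "P \<alpha> (cut sq R \<alpha>) (sq \<alpha>)" for \<alpha>
  proof (induction \<alpha> rule: wf_induct[OF wfR])
    case (1 \<alpha>)
    have fb: "\<forall>\<beta>\<in>underS r \<alpha>. continuous_on UNIV (ff \<beta>) \<and> ff \<beta> -` {snd (cut sq R \<alpha> \<beta>)} \<in> null_sets lebesgue"
    proof
      fix \<beta> assume b: "\<beta> \<in> underS r \<alpha>"
      have "P \<beta> (cut sq R \<beta>) (sq \<beta>)" using 1 b uS by blast
      then have "ff \<beta> -` {snd (sq \<beta>)} \<in> null_sets lebesgue" unfolding P_def by blast
      then show "continuous_on UNIV (ff \<beta>) \<and> ff \<beta> -` {snd (cut sq R \<alpha> \<beta>)} \<in> null_sets lebesgue"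
        using ffc cut_eq[OF b] by simp
    qed
    obtain a y where ay: "a \<notin> Nn \<alpha>" "\<forall>\<beta>\<in>underS r \<alpha>. ff \<beta> a \<noteq> snd (cut sq R \<alpha> \<beta>)"
      "pp \<alpha> < y" "y < qq \<alpha>" "\<forall>\<beta>\<in>underS r \<alpha>. ff \<alpha> (fst (cut sq R \<alpha> \<beta>)) \<noteq> y"
      "ff \<alpha> a \<noteq> y" "ff \<alpha> -` {y} \<in> null_sets lebesgue"
      using step_exists[OF star small[of \<alpha>] Nn1[of \<alpha>] fb ffc[of \<alpha>] ppq[of \<alpha>]] by blast
    have ex: "\<exists>pr. P \<alpha> (cut sq R \<alpha>) pr"
      by (rule exI[of _ "(a, y)"]) (simp add: P_def ay)
    show ?case using someI_ex[OF ex] sq_eq[of \<alpha>] unfolding H_def by simp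
  qed
  define a where "a \<alpha> = fst (sq \<alpha>)" for \<alpha>
  define y where "y \<alpha> = snd (sq \<alpha>)" for \<alpha>
  have Q1: "a \<alpha> \<notin> Nn \<alpha>" for \<alpha> using Pall[of \<alpha>] unfolding P_def a_def by blast
  have Q2: "ff \<beta> (a \<alpha>) \<noteq> y \<beta>" if "\<beta> \<in> underS r \<alpha>" for \<alpha> \<beta>
    using Pall[of \<alpha>] cut_eq[OF that] that unfolding P_def a_def y_def by auto
  have Q3: "pp \<alpha> < y \<alpha> \<and> y \<alpha> < qq \<alpha>" for \<alpha> using Pall[of \<alpha>] unfolding P_def y_def by blast
  have Q4: "ff \<alpha> (a \<beta>) \<noteq> y \<alpha>" if "\<beta> \<in> underS r \<alpha>" for \<alpha> \<beta>
    using Pall[of \<alpha>] cut_eq[OF that] that unfolding P_def a_def y_def by auto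
  have Q5: "ff \<alpha> (a \<alpha>) \<noteq> y \<alpha>" for \<alpha> using Pall[of \<alpha>] unfolding P_def a_def y_def by blast
  show ?thesis
  proof (rule exI[of _ "range a"], intro conjI allI impI notI)
    assume "range a \<in> null_sets lebesgue"
    then obtain \<alpha> where "range a \<subseteq> Nn \<alpha>" using Nn2 by blast
    then show False using Q1[of \<alpha>] by blast
  next
    fix f :: "real ^ 'n \<Rightarrow> real"
    assume fc: "continuous_on UNIV f" and ex: "\<exists>u v. u < v \<and> {u..v} \<subseteq> f ` range a"
    then obtain u v where uv: "u < v" "{u..v} \<subseteq> f ` range a" by blast
    obtain \<alpha> where al: "ff \<alpha> = f" "pp \<alpha> = u" "qq \<alpha> = v" using ffs[OF fc uv(1)] by blast
    have "y \<alpha> \<in> {u..v}" using Q3[of \<alpha>] al by auto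
    then have "y \<alpha> \<in> f ` range a" using uv(2) by blast
    then obtain \<beta> where yb: "y \<alpha> = f (a \<beta>)" by blast
    have tot: "(\<alpha>, \<beta>) \<in> r \<or> (\<beta>, \<alpha>) \<in> r" using wo_rel.TOTALS[OF wo] Fr by blast
    show False
    proof (cases "\<beta> = \<alpha>")
      case True then show False using Q5[of \<alpha>] yb al by simp
    next
      case False
      show False
      proof (cases "(\<beta>, \<alpha>) \<in> r")
        case True
        then have "\<beta> \<in> underS r \<alpha>" using False by (simp add: underS_def)
        then show False using Q4 yb al by metis
      next
        case nb: False
        then have "(\<alpha>, \<beta>) \<in> r" using tot by blast
        then have "\<alpha> \<in> underS r \<beta>" using False by (simp add: underS_def)
        then show False using Q2 yb al by metis
      qed
    qed
  qed
qed

end
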